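(* For every pair of positive integers $g,k$, every graph $G_{g,k}$ obtained by the construction described in the context has girth at least $g$.
   Context: Hypergraph notions. A closed walk of length $\ell$ in a hypergraph $H$ is a sequence $v_0F_0v_1F_1\ldots F_{\ell-1}v_0$ with $v_i,v_{i+1}\in F_i$ for all $0\le i<\ell$ (indices mod $\ell$), $F_i\ne F_{i+1}$ for all $i$ (indices mod $\ell$), and $v_1,\ldots,v_{\ell-1}$ pairwise distinct. An $r$-uniform hypergraph $H$ is tranquil, witnessed by labellings $\lambda=\{\lambda_F\}_{F\in E(H)}$ with $\lambda_F:F\to\{1,\dots,r\}$, if for every closed walk $W=v_0F_0\ldots F_{\ell-1}v_0$ the multigraph on $\{1,\dots,r\}$ with edge multiset $\{\lambda_{F_i}(v_i)\lambda_{F_i}(v_{i+1}):0\le i<\ell\}$ is bridgeless. The chromatic number of a hypergraph is the least number of colours in a vertex colouring with no monochromatic hyperedge; its girth is the length of a shortest Berge cycle (distinct hyperedges $F_1,\dots,F_\ell$ and distinct vertices $x_1,\dots,x_\ell$ with $x_i\in F_i\cap F_{i+1}$, indices mod $\ell$). Construction. Fix a positive integer $g$. $G_{g,1}$ is a single vertex. For $k\ge 2$, given a graph $G_{g,k-1}$ obtained by the construction, with vertex set identified with $\{1,\dots,r\}$, take a finite tranquil $r$-uniform hypergraph $H$ with chromatic number at least $k$ and girth at least $\lceil g/3\rceil$, together with tranquility-witnessing labellings $\lambda_F$, each $\lambda_F:F\to\{1,\dots,r\}$ a bijection. The graph $G_{g,k}$ consists of an independent set $T$ with a bijection $\nu:T\to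 V(H)$, together with, for each hyperedge $F\in E(H)$, a disjoint copy $G_F$ of $G_{g,k-1}$; for each $F\in E(H)$ one adds the perfect matching between $G_F$ and $\nu^{-1}(F)$ joining the vertex of $G_F$ corresponding to $i\in\{1,\dots,r\}$ to the vertex $t\in\nu^{-1}(F)$ with $\lambda_F(\nu(t))=i$. No other edges are present. The girth of a graph is the length of its shortest cycle (infinite if acyclic). *)

theory Defs
  imports Complex_Main "HOL-Library.Extended_Nat"
begin

definition graph_cycle :: "nat set \<Rightarrow> nat set set \<Rightarrow> nat list \<Rightarrow> bool" where
  "graph_cycle V E xs \<longleftrightarrow> length xs \<ge> 3 \<and> distinct xs \<and> set xs \<subseteq> V \<and>
     (\<forall>i < length xs. {xs ! i, xs ! (Suc i mod length xs)} \<in> E)"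

text \<open>Girth: length of a shortest cycle; infinite (Inf of the empty set) if acyclic.\<close>
definition graph_girth :: "nat set \<Rightarrow> nat set set \<Rightarrow> enat" where
  "graph_girth V E = (INF xs \<in> {xs. graph_cycle V E xs}. enat (length xs))"

text \<open>Closed walk v_0 F_0 v_1 ... F_(l-1) v_0, given by functions v, F on indices 0..l-1 (mod l).\<close>
definition hyp_closed_walk :: "nat set set \<Rightarrow> nat \<Rightarrow> (nat \<Rightarrow> nat) \<Rightarrow> (nat \<Rightarrow> nat set) \<Rightarrow> bool" where
  "hyp_closed_walk EH l v F \<longleftrightarrow> l \<ge> 1 \<and>
     (\<forall>i < l. F i \<in> EH \<and> v i \<in> F i \<and> v (Suc i mod l) \<in> F i \<and> F i \<noteq> F (Suc i mod l)) \<and>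
     inj_on v {1..<l}"

text \<open>The multigraph with edges a_i b_i (i < l) is bridgeless: removing any single non-loop
  edge (one copy) leaves its endpoints connected.\<close>
definition multigraph_bridgeless :: "nat \<Rightarrow> (nat \<Rightarrow> nat) \<Rightarrow> (nat \<Rightarrow> nat) \<Rightarrow> bool" where
  "multigraph_bridgeless l a b \<longleftrightarrow>
     (\<forall>i < l. a i \<noteq> b i \<longrightarrow>
        (\<lambda>x y. \<exists>j < l. j \<noteq> i \<and> ((x = a j \<and> y = b j) \<or> (x = b j \<and> y = a j)))\<^sup>*\<^sup>* (a i) (b i))"

definition tranquil :: "nat set set \<Rightarrow> (nat set \<Rightarrow> nat \<Rightarrow> nat) \<Rightarrow> bool" where
  "tranquil EH lam \<longleftrightarrow>
     (\<forall>l v F. hyp_closed_walk EH l v F \<longrightarrow>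
        multigraph_bridgeless l (\<lambda>i. lam (F i) (v i)) (\<lambda>i. lam (F i) (v (Suc i mod l))))"

definition hyp_chromatic_ge :: "nat set \<Rightarrow> nat set set \<Rightarrow> nat \<Rightarrow> bool" where
  "hyp_chromatic_ge VH EH k \<longleftrightarrow>
     (\<forall>c :: nat \<Rightarrow> nat. (\<forall>x \<in> VH. c x < k - 1) \<longrightarrow> (\<exists>F \<in> EH. \<exists>col. \<forall>x \<in> F. c x = col))"

text \<open>Berge cycle of length l \<ge> 2: distinct hyperedges F_1..F_l, distinct vertices x_1..x_l,
  x_i in F_i and F_(i+1) (indices mod l; here 0-based).\<close>
definition berge_cycle :: "nat set set \<Rightarrow> nat \<Rightarrow> (nat \<Rightarrow> nat set) \<Rightarrow> (nat \<Rightarrow> nat) \<Rightarrow> bool" where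
  "berge_cycle EH l F x \<longleftrightarrow> l \<ge> 2 \<and> inj_on F {..<l} \<and> inj_on x {..<l} \<and>
     (\<forall>i < l. F i \<in> EH \<and> x i \<in> F i \<and> x i \<in> F (Suc i mod l))"

definition berge_girth_ge :: "nat set set \<Rightarrow> nat \<Rightarrow> bool" where
  "berge_girth_ge EH m \<longleftrightarrow> (\<forall>l F x. berge_cycle EH l F x \<longrightarrow> l \<ge> m)"

inductive construction :: "nat \<Rightarrow> nat \<Rightarrow> nat set \<Rightarrow> nat set set \<Rightarrow> bool" for g :: nat where
  base: "construction g 1 {v} {}"
| step: "\<lbrakk> construction g k V' E'; k \<ge> 1;
           r = card V'; bij_betw \<phi> V' {1..r};
           finite VH; \<forall>F \<in> EH. F \<subseteq> VH \<and> card F = r;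
           \<forall>F \<in> EH. bij_betw (lam F) F {1..r};
           tranquil EH lam;
           hyp_chromatic_ge VH EH (Suc k);
           berge_girth_ge EH (nat \<lceil>real g / 3\<rceil>);
           bij_betw \<nu> T VH;
           \<forall>F \<in> EH. inj_on (\<psi> F) V';
           \<forall>F \<in> EH. \<psi> F ` V' \<inter> T = {};
           \<forall>F \<in> EH. \<forall>F' \<in> EH. F \<noteq> F' \<longrightarrow> \<psi> F ` V' \<inter> \<psi> F' ` V' = {};
           V = T \<union> (\<Union>F \<in> EH. \<psi> F ` V');
           E = (\<Union>F \<in> EH. (\<lambda>e. \<psi> F ` e) ` E') \<union>
               {{\<psi> F u, t} | F u t. F \<in> EH \<and> u \<in> V' \<and> t \<in> T \<and> \<nu> t \<in> F \<and> lam F (\<nu> t) = \<phi> u} \<rbrakk>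
         \<Longrightarrow> construction g (Suc k) V E"

end

theory Submission
  imports Defs
begin


lemma berge_extract:
  assumes m1: "1 \<le> m" and F0: "F 0 = F m" and injx: "inj_on x {..<m}"
    and loc: "\<forall>j<m. F j \<in> EH \<and> x j \<in> F j \<and> x j \<in> F (Suc j) \<and> F j \<noteq> F (Suc j)"
  shows "\<exists>L\<le>m. \<exists>F' x'. berge_cycle EH L F' x'"
proof -
  define P where "P d \<longleftrightarrow> (\<exists>i. i + d \<le> m \<and> 0 < d \<and> F i = F (i + d))" for d
  have Pm: "P m" using m1 F0 unfolding P_def by (intro exI[of _ 0]) auto
  define d where "d = (LEAST d. P d)"
  have Pd: "P d" unfolding d_def using Pm by (rule LeastI)
  have dmin: "\<And>d'. P d' \<Longrightarrow> d \<le> d'" unfolding d_def by (rule Least_le)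
  have dm: "d \<le> m" using dmin[OF Pm] .
  obtain i where i: "i + d \<le> m" "0 < d" "F i = F (i + d)" using Pd unfolding P_def by blast
  have d2: "d \<ge> 2"
  proof (rule ccontr)
    assume "\<not> 2 \<le> d"
    then have "d = 1" using i by linarith
    then show False using loc i by (metis Suc_eq_plus1 add_lessD1 less_add_one order_less_le_trans)
  qed
  define F' where "F' s = F (i + s)" for s
  define x' where "x' s = x (i + s)" for s
  have injF: "inj_on F' {..<d}"
  proof (rule inj_onI)
    fix s s' assume s: "s \<in> {..<d}" "s' \<in> {..<d}" "F' s = F' s'"
    show "s = s'"
    proof (rule ccontr)
      assume ne: "s \<noteq> s'"
      { fix a b assume ab: "a < b" "b < d" "F (i + a) = F (i + b)"
        have "P (b - a)" unfolding P_def using ab i by (intro exI[of _ "i + a"]) auto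
        then have False using dmin[of "b - a"] ab by linarith }
      then show False using s ne unfolding F'_def by (metis lessThan_iff linorder_neqE_nat)
    qed
  qed
  have injx': "inj_on x' {..<d}"
    unfolding x'_def inj_on_def
  proof (intro ballI impI)
    fix a b assume "a \<in> {..<d}" "b \<in> {..<d}" "x (i + a) = x (i + b)"
    then have "i + a = i + b" using injx i unfolding inj_on_def
      by (metis add_less_cancel_left lessThan_iff order_less_le_trans)
    then show "a = b" by simp
  qed
  have "berge_cycle EH d F' x'"
    unfolding berge_cycle_def
  proof (intro conjI allI impI)
    show "2 \<le> d" by fact
    show "inj_on F' {..<d}" by fact
    show "inj_on x' {..<d}" by fact
    fix s assume s: "s < d"
    then have ism: "i + s < m" using i by linarith
    show "F' s \<in> EH" "x' s \<in> F' s" using loc ism unfolding F'_def x'_def by auto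
    show "x' s \<in> F' (Suc s mod d)"
    proof (cases "Suc s < d")
      case True
      then show ?thesis using loc ism unfolding F'_def x'_def by auto
    next
      case False
      then have "Suc s = d" using s by linarith
      then show ?thesis using loc ism i unfolding F'_def x'_def by auto
    qed
  qed
  then show ?thesis using dm by blast
qed

lemma ceil3: "g \<le> 3 * nat \<lceil>real g / 3\<rceil>"
proof -
  have "real g / 3 \<le> of_int \<lceil>real g / 3\<rceil>" by (rule le_of_int_ceiling)
  then have "real g \<le> 3 * real (nat \<lceil>real g / 3\<rceil>)" by linarith
  then show ?thesis by linarith
qed



locale stp =
  fixes g :: nat and V' :: "nat set" and E' :: "nat set set" and \<phi> :: "nat \<Rightarrow> nat"
    and EH :: "nat set set" and lam :: "nat set \<Rightarrow> nat \<Rightarrow> nat" and \<nu> :: "nat \<Rightarrow> nat"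
    and T :: "nat set" and \<psi> :: "nat set \<Rightarrow> nat \<Rightarrow> nat" and V :: "nat set" and E :: "nat set set"
  assumes phi: "inj_on \<phi> V'"
  and lam: "\<And>F. F \<in> EH \<Longrightarrow> inj_on (lam F) F"
  and bg: "berge_girth_ge EH (nat \<lceil>real g / 3\<rceil>)"
  and nu: "inj_on \<nu> T"
  and psi: "\<And>F. F \<in> EH \<Longrightarrow> inj_on (\<psi> F) V'"
  and psiT: "\<And>F. F \<in> EH \<Longrightarrow> \<psi> F ` V' \<inter> T = {}"
  and psiD: "\<And>F F'. F \<in> EH \<Longrightarrow> F' \<in> EH \<Longrightarrow> F \<noteq> F' \<Longrightarrow> \<psi> F ` V' \<inter> \<psi> F' ` V' = {}"
  and Vdef: "V = T \<union> (\<Union>F \<in> EH. \<psi> F ` V')"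
  and Edef: "E = (\<Union>F \<in> EH. (\<lambda>e. \<psi> F ` e) ` E') \<union>
               {{\<psi> F u, t} | F u t. F \<in> EH \<and> u \<in> V' \<and> t \<in> T \<and> \<nu> t \<in> F \<and> lam F (\<nu> t) = \<phi> u}"
  and E'V': "\<forall>e\<in>E'. e \<subseteq> V'"
  and IH: "\<And>ys. graph_cycle V' E' ys \<Longrightarrow> g \<le> length ys"
begin

lemma copy_unique: "F \<in> EH \<Longrightarrow> F' \<in> EH \<Longrightarrow> v \<in> \<psi> F ` V' \<Longrightarrow> v \<in> \<psi> F' ` V' \<Longrightarrow> F = F'"
  using psiD by blast

definition cp :: "nat \<Rightarrow> nat set" where
  "cp v = (SOME F. F \<in> EH \<and> v \<in> \<psi> F ` V')"

lemma cp: "v \<in> V \<Longrightarrow> v \<notin> T \<Longrightarrow> cp v \<in> EH \<and> v \<in> \<psi> (cp v) ` V'"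
  unfolding cp_def by (rule someI_ex) (use Vdef in blast)

lemma cp_eq: "F \<in> EH \<Longrightarrow> v \<in> \<psi> F ` V' \<Longrightarrow> cp v = F"
proof -
  assume a: "F \<in> EH" "v \<in> \<psi> F ` V'"
  then have "v \<in> V" "v \<notin> T" using Vdef psiT by blast+
  then show ?thesis using cp copy_unique a by blast
qed

lemma E1:
  assumes "{a,b} \<in> E" "a \<in> T"
  shows "\<exists>F\<in>EH. \<exists>u\<in>V'. b = \<psi> F u \<and> \<nu> a \<in> F \<and> lam F (\<nu> a) = \<phi> u"
proof -
  have "{a,b} \<in> (\<Union>F \<in> EH. (\<lambda>e. \<psi> F ` e) ` E') \<or>
    {a,b} \<in> {{\<psi> F u, t} | F u t. F \<in> EH \<and> u \<in> V' \<and> t \<in> T \<and> \<nu> t \<in> F \<and> lam F (\<nu> t) = \<phi> u}"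
    using assms(1) unfolding Edef Un_iff .
  then show ?thesis
  proof
    assume "{a,b} \<in> (\<Union>F \<in> EH. (\<lambda>e. \<psi> F ` e) ` E')"
    then obtain F e where "F \<in> EH" "e \<in> E'" "{a,b} = \<psi> F ` e" by blast
    then have "a \<in> \<psi> F ` V'" using E'V' by blast
    then show ?thesis using psiT \<open>F \<in> EH\<close> assms(2) by blast
  next
    assume "{a,b} \<in> {{\<psi> F u, t} | F u t. F \<in> EH \<and> u \<in> V' \<and> t \<in> T \<and> \<nu> t \<in> F \<and> lam F (\<nu> t) = \<phi> u}"
    then obtain F u t where h: "{a,b} = {\<psi> F u, t}" "F \<in> EH" "u \<in> V'" "t \<in> T" "\<nu> t \<in> F" "lam F (\<nu> t) = \<phi> u"
      by blast
    have "\<psi> F u \<notin> T" using psiT h by blast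
    then have "a \<noteq> \<psi> F u" using assms(2) by blast
    then have "a = t" "b = \<psi> F u" using h(1) by (auto simp: doubleton_eq_iff)
    then show ?thesis using h by blast
  qed
qed

lemma E1': "{a,b} \<in> E \<Longrightarrow> a \<in> T \<Longrightarrow> b \<notin> T"
proof -
  assume "{a,b} \<in> E" "a \<in> T"
  then obtain F u where "F \<in> EH" "u \<in> V'" "b = \<psi> F u" using E1 by blast
  then show ?thesis using psiT[of F] by blast
qed

lemma E2:
  assumes "{a,b} \<in> E" "a \<notin> T"  "b \<notin> T"
  shows "\<exists>F\<in>EH. \<exists>e\<in>E'. {a,b} = \<psi> F ` e"
proof -
  have "{a,b} \<in> (\<Union>F \<in> EH. (\<lambda>e. \<psi> F ` e) ` E') \<or>
    {a,b} \<in> {{\<psi> F u, t} | F u t. F \<in> EH \<and> u \<in> V' \<and> t \<in> T \<and> \<nu> t \<in> F \<and> lam F (\<nu> t) = \<phi> u}"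
    using assms(1) unfolding Edef Un_iff .
  then show ?thesis
  proof
    assume "{a,b} \<in> (\<Union>F \<in> EH. (\<lambda>e. \<psi> F ` e) ` E')"
    then show ?thesis by blast
  next
    assume "{a,b} \<in> {{\<psi> F u, t} | F u t. F \<in> EH \<and> u \<in> V' \<and> t \<in> T \<and> \<nu> t \<in> F \<and> lam F (\<nu> t) = \<phi> u}"
    then obtain F u t where h: "{a,b} = {\<psi> F u, t}" "t \<in> T" by blast
    then have "t \<in> {a,b}" by simp
    then show ?thesis using assms h(2) by blast
  qed
qed

lemma E2': "{a,b} \<in> E \<Longrightarrow> a \<notin> T \<Longrightarrow> b \<notin> T \<Longrightarrow> \<exists>F\<in>EH. a \<in> \<psi> F ` V' \<and> b \<in> \<psi> F ` V'"
proof -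
  assume "{a,b} \<in> E" "a \<notin> T" "b \<notin> T"
  then obtain F e where "F \<in> EH" "e \<in> E'" "{a,b} = \<psi> F ` e" using E2 by blast
  moreover have "e \<subseteq> V'" using E'V' \<open>e \<in> E'\<close> by blast
  ultimately show ?thesis by blast
qed

lemma partner_unique_T:
  assumes "t1 \<in> T" "t2 \<in> T" "{t1,v} \<in> E" "{t2,v} \<in> E"
  shows "t1 = t2"
proof -
  obtain F1 u1 where 1: "F1 \<in> EH" "u1 \<in> V'" "v = \<psi> F1 u1" "\<nu> t1 \<in> F1" "lam F1 (\<nu> t1) = \<phi> u1"
    using E1 assms by blast
  obtain F2 u2 where 2: "F2 \<in> EH" "u2 \<in> V'" "v = \<psi> F2 u2" "\<nu> t2 \<in> F2" "lam F2 (\<nu> t2) = \<phi> u2"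
    using E1 assms by blast
  have "F1 = F2" using copy_unique 1 2 by blast
  then have "u1 = u2" using psi 1 2 by (metis inj_on_def)
  then have "\<nu> t1 = \<nu> t2" using lam 1 2 \<open>F1 = F2\<close> by (metis inj_on_def)
  then show ?thesis using nu assms by (metis inj_on_def)
qed

lemma partner_unique_copy:
  assumes "t \<in> T" "{t,v1} \<in> E" "{t,v2} \<in> E" "F \<in> EH" "v1 \<in> \<psi> F ` V'" "v2 \<in> \<psi> F ` V'"
  shows "v1 = v2"
proof -
  obtain F1 u1 where 1: "F1 \<in> EH" "u1 \<in> V'" "v1 = \<psi> F1 u1" "\<nu> t \<in> F1" "lam F1 (\<nu> t) = \<phi> u1"
    using E1 assms by blast
  obtain F2 u2 where 2: "F2 \<in> EH" "u2 \<in> V'" "v2 = \<psi> F2 u2" "\<nu> t \<in> F2" "lam F2 (\<nu> t) = \<phi> u2"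
    using E1 assms by blast
  have "F1 = F" "F2 = F" using copy_unique 1 2 assms by blast+
  then have "\<phi> u1 = \<phi> u2" using 1 2 by simp
  then have "u1 = u2" using phi 1 2 by (metis inj_on_def)
  then show ?thesis using 1 2 \<open>F1 = F\<close> \<open>F2 = F\<close> by simp
qed

lemma caseA:
  assumes cyc: "graph_cycle V E xs" and F: "F \<in> EH" and sub: "set xs \<subseteq> \<psi> F ` V'"
  shows "g \<le> length xs"
proof -
  define h where "h = the_inv_into V' (\<psi> F)"
  have injF: "inj_on (\<psi> F) V'" using psi F .
  have hV: "x \<in> \<psi> F ` V' \<Longrightarrow> h x \<in> V'" for x
    unfolding h_def using injF by (auto simp: the_inv_into_f_f)
  have hinv: "x \<in> \<psi> F ` V' \<Longrightarrow> \<psi> F (h x) = x" for x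
    unfolding h_def using injF by (auto simp: the_inv_into_f_f)
  have injh: "inj_on h (\<psi> F ` V')" using hinv by (metis inj_on_inverseI)
  define ys where "ys = map h xs"
  have "graph_cycle V' E' ys"
    unfolding graph_cycle_def
  proof (intro conjI allI impI)
    show "3 \<le> length ys" using cyc unfolding ys_def graph_cycle_def by simp
    show "distinct ys" using cyc sub injh unfolding ys_def graph_cycle_def
      by (simp add: distinct_map inj_on_subset)
    show "set ys \<subseteq> V'" using sub hV unfolding ys_def by auto
    fix i assume i: "i < length ys"
    let ?j = "Suc i mod length xs"
    have ilen: "i < length xs" "?j < length xs" using i unfolding ys_def by (auto intro: mod_less_divisor)
    have a: "xs ! i \<in> \<psi> F ` V'" "xs ! ?j \<in> \<psi> F ` V'" using sub ilen nth_mem by blast+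
    have "{xs ! i, xs ! ?j} \<in> E" using cyc ilen unfolding graph_cycle_def by blast
    moreover have "xs ! i \<notin> T" "xs ! ?j \<notin> T" using a psiT F by blast+
    ultimately obtain F' e where e: "F' \<in> EH" "e \<in> E'" "{xs ! i, xs ! ?j} = \<psi> F' ` e"
      using E2 by blast
    have eV: "e \<subseteq> V'" using E'V' e by blast
    have "F' = F" using copy_unique[OF e(1) F, of "xs ! i"] a e eV by blast
    have "\<psi> F ` e = \<psi> F ` {h (xs ! i), h (xs ! ?j)}" using e \<open>F' = F\<close> hinv a by simp
    then have "e = {h (xs ! i), h (xs ! ?j)}"
    proof -
      have "{h (xs ! i), h (xs ! ?j)} \<subseteq> V'" using hV a by simp
      then show ?thesis using inj_on_image_eq_iff[OF injF eV] \<open>\<psi> F ` e = \<psi> F ` {h (xs ! i), h (xs ! ?j)}\<close> by blast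
    qed
    then show "{ys ! i, ys ! (Suc i mod length ys)} \<in> E'" using e ilen unfolding ys_def by simp
  qed
  then show ?thesis using IH unfolding ys_def by fastforce
qed

end


locale cyc = stp +
  fixes xs :: "nat list"
  assumes cyc: "graph_cycle V E xs"
begin

abbreviation "n \<equiv> length xs"
definition w :: "nat \<Rightarrow> nat" where "w a = xs ! (a mod n)"

lemma n3: "3 \<le> n" using cyc unfolding graph_cycle_def by simp

lemma npos: "0 < n" using n3 by linarith

lemma w_V: "w a \<in> V"
  using cyc npos unfolding graph_cycle_def w_def by (meson mod_less_divisor nth_mem subsetD)

lemma w_edge: "{w a, w (Suc a)} \<in> E"
proof -
  have "{xs ! (a mod n), xs ! (Suc (a mod n) mod n)} \<in> E"
    using cyc npos unfolding graph_cycle_def by simp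
  then show ?thesis unfolding w_def by (simp add: mod_Suc_eq)
qed

lemma w_edge': "{w (Suc a), w a} \<in> E"
  using w_edge by (simp add: insert_commute)

lemma w_eq: "w a = w b \<longleftrightarrow> a mod n = b mod n"
  using cyc npos unfolding graph_cycle_def w_def by (simp add: nth_eq_iff_index_eq)

lemma w_period: "w (a + n) = w a"
  unfolding w_def by simp

lemma w_period': "w (a + n * k) = w a"
  unfolding w_def by simp

lemma w_copy: "w a \<notin> T \<Longrightarrow> cp (w a) \<in> EH \<and> w a \<in> \<psi> (cp (w a)) ` V'"
  using cp w_V by blast

lemma T1: "w a \<in> T \<Longrightarrow> w (Suc a) \<notin> T"
  using E1' w_edge by blast

lemma T1': "w (Suc a) \<in> T \<Longrightarrow> w a \<notin> T"
  using E1' w_edge' by blast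

lemma mod2: "a mod n \<noteq> (a + 2) mod n"
proof
  assume h: "a mod n = (a + 2) mod n"
  define b where "b = a mod n"
  have bn: "b < n" unfolding b_def using npos by simp
  have "(a + 2) mod n = (b + 2) mod n" unfolding b_def by (rule mod_add_left_eq[symmetric])
  then have e: "b = (b + 2) mod n" using h b_def by simp
  show False
  proof (cases "b + 2 < n")
    case True
    then show False using e by simp
  next
    case False
    then have "(b + 2) mod n = b + 2 - n" using bn n3
      by (simp add: le_mod_geq)
    then show False using e False n3 by simp
  qed
qed

lemma T2: "w a \<in> T \<Longrightarrow> w (Suc (Suc a)) \<notin> T"
proof
  assume a: "w a \<in> T" "w (Suc (Suc a)) \<in> T"
  have "w a = w (Suc (Suc a))"
    using partner_unique_T[OF a(1) a(2) w_edge w_edge'] .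
  then show False using mod2[of a] w_eq by simp
qed

lemma run:
  assumes p: "w p \<in> T" and nt: "\<forall>a. p < a \<and> a < q \<longrightarrow> w a \<notin> T"
  shows "Suc p + d < q \<Longrightarrow> w (Suc p + d) \<in> \<psi> (cp (w (Suc p))) ` V'"
proof (induction d)
  case 0
  then show ?case using w_copy nt by simp
next
  case (Suc d)
  have c: "cp (w (Suc p)) \<in> EH" using w_copy nt Suc by simp
  have n1: "w (Suc p + d) \<notin> T" "w (Suc (Suc p + d)) \<notin> T" using nt Suc by auto
  obtain F where F: "F \<in> EH" "w (Suc p + d) \<in> \<psi> F ` V'" "w (Suc (Suc p + d)) \<in> \<psi> F ` V'"
    using E2'[OF w_edge n1] by blast
  have "F = cp (w (Suc p))" using copy_unique[OF F(1) c] F Suc by simp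
  then show ?case using F by simp
qed

end


locale cycB = cyc +
  fixes p0 :: nat
  assumes p0: "w p0 \<in> T"
begin

definition nxt :: "nat \<Rightarrow> nat" where "nxt p = (LEAST a. p < a \<and> w a \<in> T)"

lemma nxt_ex: "\<exists>a. p < a \<and> w a \<in> T"
proof (intro exI conjI)
  have "1 * Suc p \<le> n * Suc p" using npos by (intro mult_le_mono1) linarith
  then show "p < p0 + n * Suc p" by simp
  show "w (p0 + n * Suc p) \<in> T" using p0 w_period'[of p0 "Suc p"] by argo
qed

lemma nxt: "p < nxt p" "w (nxt p) \<in> T"
  using LeastI_ex[OF nxt_ex[of p]] unfolding nxt_def by auto

lemma nxt_min: "p < a \<Longrightarrow> w a \<in> T \<Longrightarrow> nxt p \<le> a"
  unfolding nxt_def by (rule Least_le) simp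

lemma nxt_between: "p < a \<Longrightarrow> a < nxt p \<Longrightarrow> w a \<notin> T"
  using nxt_min by force

lemma nxt3: "w p \<in> T \<Longrightarrow> p + 3 \<le> nxt p"
proof -
  assume a: "w p \<in> T"
  have "nxt p \<noteq> Suc p" using T1[OF a] nxt(2) by metis
  moreover have "nxt p \<noteq> Suc (Suc p)" using T2[OF a] nxt(2) by metis
  ultimately show ?thesis using nxt(1)[of p] by linarith
qed

definition pp :: "nat \<Rightarrow> nat" where "pp j = (nxt ^^ j) p0"

lemma pp0: "pp 0 = p0" unfolding pp_def by simp
lemma ppS: "pp (Suc j) = nxt (pp j)" unfolding pp_def by simp

lemma ppT: "w (pp j) \<in> T"
  by (induction j) (simp_all add: pp0 p0 ppS nxt)

lemma pp3: "pp j + 3 \<le> pp (Suc j)"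
  using nxt3[OF ppT] ppS by simp

lemma pp_ge: "p0 + 3 * j \<le> pp j"
proof (induction j)
  case 0 then show ?case by (simp add: pp0)
next
  case (Suc j) then show ?case using pp3[of j] by simp
qed

lemma pp_mono: "strict_mono pp"
  unfolding strict_mono_Suc_iff
proof
  fix j show "pp j < pp (Suc j)" using pp3[of j] by linarith
qed

definition m :: nat where "m = (LEAST j. p0 + n \<le> pp j)"

lemma m_ex: "p0 + n \<le> pp n" using pp_ge[of n] by linarith

lemma m_prop: "p0 + n \<le> pp m" unfolding m_def by (rule LeastI, rule m_ex)

lemma m1: "1 \<le> m"
proof (rule ccontr)
  assume "\<not> 1 \<le> m" then have "m = 0" by simp
  then show False using m_prop npos pp0 by simp
qed

lemma ppm1: "pp (m - 1) < p0 + n"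
proof -
  have "\<not> p0 + n \<le> pp (m - 1)"
    unfolding m_def by (rule not_less_Least) (use m1 in \<open>simp add: m_def[symmetric]\<close>)
  then show ?thesis by simp
qed

lemma ppm: "pp m = p0 + n"
proof -
  have "Suc (m - 1) = m" using m1 by linarith
  then have "pp m = nxt (pp (m - 1))" using ppS by metis
  also have "\<dots> \<le> p0 + n" using ppm1 p0 w_period by (intro nxt_min) auto
  finally show ?thesis using m_prop by simp
qed

lemma m3: "3 * m \<le> n" using pp_ge[of m] ppm by simp

definition FF :: "nat \<Rightarrow> nat set" where "FF j = cp (w (Suc (pp j)))"
definition xx :: "nat \<Rightarrow> nat" where "xx j = \<nu> (w (pp (Suc j)))"

lemma FF_m: "FF m = FF 0"
proof -
  have "Suc (pp m) = Suc p0 + n" using ppm by simp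
  then show ?thesis unfolding FF_def using pp0 w_period[of "Suc p0"] by simp
qed

lemma loc: "FF j \<in> EH \<and> xx j \<in> FF j \<and> xx j \<in> FF (Suc j) \<and> FF j \<noteq> FF (Suc j)"
proof -
  define p where "p = pp j"
  define q where "q = pp (Suc j)"
  have pT: "w p \<in> T" and qT: "w q \<in> T" unfolding p_def q_def using ppT by auto
  have q: "q = nxt p" unfolding p_def q_def by (simp add: ppS)
  have pq: "p + 3 \<le> q" unfolding p_def q_def by (rule pp3)
  have nt: "\<forall>a. p < a \<and> a < q \<longrightarrow> w a \<notin> T" using nxt_between q by blast
  have c: "FF j \<in> EH" "w (Suc p) \<in> \<psi> (FF j) ` V'"
    using w_copy T1[OF pT] unfolding FF_def p_def by auto
  have qm: "w (q - 1) \<in> \<psi> (FF j) ` V'"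
  proof -
    have R: "w (Suc p + (q - 2 - p)) \<in> \<psi> (cp (w (Suc p))) ` V'"
      by (rule run[OF pT nt]) (use pq in linarith)
    have eq: "Suc p + (q - 2 - p) = q - 1" using pq by linarith
    have "cp (w (Suc p)) = FF j" unfolding FF_def p_def ..
    then show ?thesis using R unfolding eq by simp
  qed
  have Sq: "Suc (q - 1) = q" using pq by linarith
  have e1: "{w q, w (q - 1)} \<in> E" using w_edge'[of "q - 1"] Sq by simp
  have e2: "{w q, w (Suc q)} \<in> E" using w_edge[of q] .
  obtain F1 u1 where F1: "F1 \<in> EH" "u1 \<in> V'" "w (q - 1) = \<psi> F1 u1" "\<nu> (w q) \<in> F1"
    using E1[OF e1 qT] by blast
  have "F1 = FF j" using copy_unique[OF F1(1) c(1)] F1 qm by blast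
  then have x1: "xx j \<in> FF j" using F1 unfolding xx_def q_def by simp
  obtain F2 u2 where F2: "F2 \<in> EH" "u2 \<in> V'" "w (Suc q) = \<psi> F2 u2" "\<nu> (w q) \<in> F2"
    using E1[OF e2 qT] by blast
  have FS: "FF (Suc j) = F2" unfolding FF_def q_def[symmetric] using cp_eq F2 by blast
  then have x2: "xx j \<in> FF (Suc j)" using F2 unfolding xx_def q_def by simp
  have ne: "FF j \<noteq> FF (Suc j)"
  proof
    assume eq: "FF j = FF (Suc j)"
    have "w (Suc q) \<in> \<psi> (FF j) ` V'" using eq FS F2 by simp
    then have "w (q - 1) = w (Suc q)" using partner_unique_copy[OF qT e1 e2 c(1) qm] by simp
    then have "(q - 1) mod n = (q - 1 + 2) mod n" using w_eq Sq by simp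
    then show False using mod2 by blast
  qed
  show ?thesis using c x1 x2 ne by blast
qed

lemma window: "p0 < a \<Longrightarrow> a < b \<Longrightarrow> b \<le> p0 + n \<Longrightarrow> a mod n \<noteq> b mod n"
proof
  assume h: "p0 < a" "a < b" "b \<le> p0 + n" "a mod n = b mod n"
  then have "n dvd b - a" using mod_eq_dvd_iff_nat[of a b n] by simp
  moreover have "0 < b - a" using h by simp
  ultimately have "n \<le> b - a" by (rule dvd_imp_le)
  then show False using h by linarith
qed

lemma pp_in: "j < m \<Longrightarrow> p0 < pp (Suc j) \<and> pp (Suc j) \<le> p0 + n"
proof -
  assume j: "j < m"
  have "pp 0 < pp (Suc j)" using strict_monoD[OF pp_mono, of 0 "Suc j"] by simp
  moreover have "pp (Suc j) \<le> pp m" using strict_mono_less_eq[OF pp_mono, of "Suc j" m] j by simp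
  ultimately show ?thesis using pp0 ppm by simp
qed

lemma inj_xx: "inj_on xx {..<m}"
proof (rule inj_onI)
  fix j j' assume j: "j \<in> {..<m}" "j' \<in> {..<m}" and e: "xx j = xx j'"
  have "\<nu> (w (pp (Suc j))) = \<nu> (w (pp (Suc j')))" using e unfolding xx_def .
  then have "w (pp (Suc j)) = w (pp (Suc j'))"
    using nu ppT[of "Suc j"] ppT[of "Suc j'"] unfolding inj_on_def by blast
  then have me: "pp (Suc j) mod n = pp (Suc j') mod n" using w_eq by simp
  show "j = j'"
  proof (rule ccontr)
    assume "j \<noteq> j'"
    then consider "j < j'" | "j' < j" by linarith
    then show False
    proof cases
      case 1
      have "pp (Suc j) < pp (Suc j')" using strict_monoD[OF pp_mono] 1 by simp
      then show False using window pp_in j me by simp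
    next
      case 2
      have "pp (Suc j') < pp (Suc j)" using strict_monoD[OF pp_mono] 2 by simp
      then show False using window pp_in j me by (metis lessThan_iff)
    qed
  qed
qed

lemma caseB: "g \<le> n"
proof -
  obtain L F' x' where L: "L \<le> m" "berge_cycle EH L F' x'"
    using berge_extract[OF m1 FF_m[symmetric] inj_xx] loc by blast
  have "nat \<lceil>real g / 3\<rceil> \<le> L" using bg L unfolding berge_girth_ge_def by blast
  then show ?thesis using ceil3[of g] L m3 by linarith
qed

end


context stp begin

lemma girth_step:
  assumes c: "graph_cycle V E xs"
  shows "g \<le> length xs"
proof (cases "\<exists>i < length xs. xs ! i \<in> T")
  case True
  then obtain i where i: "i < length xs" "xs ! i \<in> T" by blast
  interpret cyc g V' E' \<phi> EH lam \<nu> T \<psi> V E xs by unfold_locales (rule c)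
  have "w i \<in> T" using i unfolding w_def by simp
  then interpret cycB g V' E' \<phi> EH lam \<nu> T \<psi> V E xs i by unfold_locales
  show ?thesis by (rule caseB)
next
  case False
  interpret cyc g V' E' \<phi> EH lam \<nu> T \<psi> V E xs by unfold_locales (rule c)
  define F0 where "F0 = cp (w 0)"
  have w0: "w 0 \<notin> T" using False npos unfolding w_def by simp
  have F0: "F0 \<in> EH" "w 0 \<in> \<psi> F0 ` V'" using w_copy[OF w0] unfolding F0_def by auto
  have all: "i < length xs \<Longrightarrow> w i \<in> \<psi> F0 ` V'" for i
  proof (induction i)
    case 0 then show ?case using F0 by simp
  next
    case (Suc i)
    have n1: "w i \<notin> T" "w (Suc i) \<notin> T" using False Suc.prems unfolding w_def by simp_all
    obtain F where F: "F \<in> EH" "w i \<in> \<psi> F ` V'" "w (Suc i) \<in> \<psi> F ` V'"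
      using E2'[OF w_edge n1] by blast
    have "F = F0" using copy_unique[OF F(1) F0(1)] F Suc by simp
    then show ?case using F by simp
  qed
  have "set xs \<subseteq> \<psi> F0 ` V'"
  proof
    fix x assume "x \<in> set xs"
    then obtain i where "i < length xs" "x = xs ! i" by (metis in_set_conv_nth)
    then show "x \<in> \<psi> F0 ` V'" using all[of i] unfolding w_def by simp
  qed
  then show ?thesis using caseA[OF c F0(1)] by simp
qed

end

lemma constr_inv:
  "construction g k V E \<Longrightarrow> (\<forall>e\<in>E. e \<subseteq> V) \<and> (\<forall>xs. graph_cycle V E xs \<longrightarrow> g \<le> length xs)"
proof (induction rule: construction.induct)
  case (base v)
  have "\<not> graph_cycle {v} {} xs" for xs
  proof
    assume h: "graph_cycle {v} {} xs"
    then have "0 < length xs" unfolding graph_cycle_def by linarith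
    then show False using h unfolding graph_cycle_def by blast
  qed
  then show ?case by blast
next
  case (step k V' E' r \<phi> VH EH lam \<nu> T \<psi> V E)
  note h = step.hyps
  interpret stp g V' E' \<phi> EH lam \<nu> T \<psi> V E
  proof
    show "inj_on \<phi> V'" using h(4) by (rule bij_betw_imp_inj_on)
    show "\<And>F. F \<in> EH \<Longrightarrow> inj_on (lam F) F" using h(7) bij_betw_imp_inj_on by blast
    show "berge_girth_ge EH (nat \<lceil>real g / 3\<rceil>)" by (rule h(10))
    show "inj_on \<nu> T" using h(11) by (rule bij_betw_imp_inj_on)
    show "\<And>F. F \<in> EH \<Longrightarrow> inj_on (\<psi> F) V'" using h(12) by blast
    show "\<And>F. F \<in> EH \<Longrightarrow> \<psi> F ` V' \<inter> T = {}" using h(13) by blast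
    show "\<And>F F'. F \<in> EH \<Longrightarrow> F' \<in> EH \<Longrightarrow> F \<noteq> F' \<Longrightarrow> \<psi> F ` V' \<inter> \<psi> F' ` V' = {}"
      using h(14) by blast
    show "V = T \<union> (\<Union>F \<in> EH. \<psi> F ` V')" by (rule h(15))
    show "E = (\<Union>F \<in> EH. (\<lambda>e. \<psi> F ` e) ` E') \<union>
               {{\<psi> F u, t} | F u t. F \<in> EH \<and> u \<in> V' \<and> t \<in> T \<and> \<nu> t \<in> F \<and> lam F (\<nu> t) = \<phi> u}"
      by (rule h(16))
    show "\<forall>e\<in>E'. e \<subseteq> V'" using step.IH by (rule conjunct1)
    show "\<And>ys. graph_cycle V' E' ys \<Longrightarrow> g \<le> length ys" using step.IH by blast
  qed
  have "\<forall>e\<in>E. e \<subseteq> V"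
  proof
    fix e assume "e \<in> E"
    then have "e \<in> (\<Union>F \<in> EH. (\<lambda>e. \<psi> F ` e) ` E') \<or>
      e \<in> {{\<psi> F u, t} | F u t. F \<in> EH \<and> u \<in> V' \<and> t \<in> T \<and> \<nu> t \<in> F \<and> lam F (\<nu> t) = \<phi> u}"
      unfolding Edef Un_iff .
    then show "e \<subseteq> V"
    proof
      assume "e \<in> (\<Union>F \<in> EH. (\<lambda>e. \<psi> F ` e) ` E')"
      then obtain F e' where "F \<in> EH" "e' \<in> E'" "e = \<psi> F ` e'" by blast
      moreover have "e' \<subseteq> V'" using E'V' \<open>e' \<in> E'\<close> by blast
      ultimately show ?thesis unfolding Vdef by blast
    next
      assume "e \<in> {{\<psi> F u, t} | F u t. F \<in> EH \<and> u \<in> V' \<and> t \<in> T \<and> \<nu> t \<in> F \<and> lam F (\<nu> t) = \<phi> u}"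
      then obtain F u t where "e = {\<psi> F u, t}" "F \<in> EH" "u \<in> V'" "t \<in> T" by blast
      then show ?thesis unfolding Vdef by blast
    qed
  qed
  then show ?case using girth_step by blast
qed

theorem lemma4p2:
  fixes g k :: nat and V :: "nat set" and E :: "nat set set"
  assumes "g > 0" and "k > 0" and "construction g k V E"
  shows "enat g \<le> graph_girth V E"
proof -
  have "\<forall>xs. graph_cycle V E xs \<longrightarrow> g \<le> length xs" using constr_inv[OF assms(3)] by blast
  then show ?thesis unfolding graph_girth_def by (auto intro!: INF_greatest)
qed


end
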